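(* Assume Assumption (S) of the context holds and define $(v,\omega)_*:=(v,M^*\omega)$ and $\|v\|_*=\sqrt{(v,v)_*}$ for $v,\omega\in\mathbb V^k$. Then for every $v\in\mathbb V^k$, $(v,\omega)_*=(v,\omega)$ for all $\omega\in\mathbb V^{k-1}$. Moreover there exist positive constants $c$ and $C$ independent of the mesh $\{I_i\}$ such that $c\|v\|\le\|v\|_*\le C\|v\|$ for all $v\in\mathbb V^k$.
   Context: Let $\Omega=[a,b]$ be partitioned into finitely many cells $I_i=[x_{i-\frac12},x_{i+\frac12}]$ with sizes $h_i$, $h=\max_i h_i$, quasi-uniform ($h\le Ch_i$ for all $i$, fixed $C$). $(\cdot,\cdot)$, $\|\cdot\|$ are the $L^2(\Omega)$ inner product and norm, $(\cdot,\cdot)_{I_i}$ the $L^2(I_i)$ inner product. $\mathbb V^m=\{v\in L^2(\Omega): v|_{I_i}\in\mathbb P^m(I_i)\ \forall i\}$. Each $I_i$ has subdivision points $x_{i-\frac12}=x_{i,0}<x_{i,1}<\dots<x_{i,k}<x_{i,k+1}=x_{i+\frac12}$, control volumes $I_{i,j}=[x_{i,j},x_{i,j+1}]$, $j=0,\dots,k$; $\mathbb V^{k,*}$ is the space of functions constant on each $I_{i,j}$. On each $I_i$ a quadrature $Q_i^k(v)=\sum_{j=0}^{k+1}A_{i,j}v(x_{i,j})$ is given with error $R_i^k(v)=\int_{I_i}v\,dx-Q_i^k(v)$, exact on $\mathbb P^{k-1}(I_i)$. $M^*:\mathbb V^k\to\mathbb V^{k,*}$ is defined cellwise: for $v=\omega|_{I_i}$,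 $(M^*\omega)|_{I_{i,0}}=v(x_{i-\frac12})+A_{i,0}v'(x_{i-\frac12})$ and $(M^*\omega)|_{I_{i,j}}-(M^*\omega)|_{I_{i,j-1}}=A_{i,j}v'(x_{i,j})$, $j=1,\dots,k$ (one-sided values from inside $I_i$). $L_{i,\ell}$ is the shifted Legendre polynomial of degree $\ell$ on $I_i$ with $L_{i,\ell}(x_{i+\frac12})=1$, $(L_{i,\ell},L_{i,m})_{I_i}=\delta_{\ell m}h_i/(2\ell+1)$. Assumption (S): $k\ge1$ and for every $i$, (1) $R_i^k(v)=0$ for all $v\in\mathbb P^{2k-1}(I_i)$, and (2) $\frac{h_i}{2k-1}-Q_i^k(L_{i,k+1}L_{i,k-1})>0$. Under (S), $(\cdot,M^*\cdot)$ is an inner product on $\mathbb V^k$. *)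

theory Defs
  imports "HOL-Analysis.Analysis" "HOL-Computational_Algebra.Polynomial"
begin

text \<open>Mesh: cells I_i = [x i, x (Suc i)], i < n. A function in V^m is given by
  its cellwise polynomials p i (i < n) of degree at most m.\<close>

definition pw_space :: "nat \<Rightarrow> nat \<Rightarrow> (nat \<Rightarrow> real poly) \<Rightarrow> bool" where
  "pw_space n m p \<longleftrightarrow> (\<forall>i<n. degree (p i) \<le> m)"

definition cell_size :: "(nat \<Rightarrow> real) \<Rightarrow> nat \<Rightarrow> real" where
  "cell_size x i = x (Suc i) - x i"

definition pw_ip :: "(nat \<Rightarrow> real) \<Rightarrow> nat \<Rightarrow> (nat \<Rightarrow> real poly) \<Rightarrow> (nat \<Rightarrow> real poly) \<Rightarrow> real" where
  "pw_ip x n p q = (\<Sum>i<n. integral {x i..x (Suc i)} (\<lambda>t. poly (p i) t * poly (q i) t))"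

definition quasi_uniform :: "real \<Rightarrow> (nat \<Rightarrow> real) \<Rightarrow> nat \<Rightarrow> bool" where
  "quasi_uniform Cq x n \<longleftrightarrow> (\<forall>i<n. Max (cell_size x ` {..<n}) \<le> Cq * cell_size x i)"

text \<open>Subdivision / quadrature points x_{i,j} and weights A_{i,j}, obtained as affine
  images of a fixed reference rule (nodes xi j on [0,1], weights w j).\<close>
definition node :: "(nat \<Rightarrow> real) \<Rightarrow> (nat \<Rightarrow> real) \<Rightarrow> nat \<Rightarrow> nat \<Rightarrow> real" where
  "node x \<xi> i j = x i + cell_size x i * \<xi> j"

definition weight :: "(nat \<Rightarrow> real) \<Rightarrow> (nat \<Rightarrow> real) \<Rightarrow> nat \<Rightarrow> nat \<Rightarrow> real" where
  "weight x w i j = cell_size x i * w j"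

definition quad :: "nat \<Rightarrow> (nat \<Rightarrow> real) \<Rightarrow> (nat \<Rightarrow> real) \<Rightarrow> (nat \<Rightarrow> real) \<Rightarrow> nat \<Rightarrow> (real \<Rightarrow> real) \<Rightarrow> real" where
  "quad k \<xi> w x i f = (\<Sum>j\<le>Suc k. weight x w i j * f (node x \<xi> i j))"

text \<open>Legendre polynomials on [-1,1] (Bonnet recursion) and the shifted ones on [a,b],
  normalised by L(b) = 1.\<close>
fun legP :: "nat \<Rightarrow> real \<Rightarrow> real" where
  "legP 0 t = 1"
| "legP (Suc 0) t = t"
| "legP (Suc (Suc n)) t =
     ((2 * real n + 3) * t * legP (Suc n) t - (real n + 1) * legP n t) / (real n + 2)"

definition shifted_legendre :: "real \<Rightarrow> real \<Rightarrow> nat \<Rightarrow> real \<Rightarrow> real" where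
  "shifted_legendre a b l t = legP l ((2 * t - a - b) / (b - a))"

definition assumption_S :: "nat \<Rightarrow> (nat \<Rightarrow> real) \<Rightarrow> (nat \<Rightarrow> real) \<Rightarrow> (nat \<Rightarrow> real) \<Rightarrow> nat \<Rightarrow> bool" where
  "assumption_S k \<xi> w x n \<longleftrightarrow> k \<ge> 1 \<and>
     (\<forall>i<n. (\<forall>p::real poly. degree p \<le> 2 * k - 1 \<longrightarrow>
               integral {x i..x (Suc i)} (poly p) - quad k \<xi> w x i (poly p) = 0)
          \<and> cell_size x i / real (2 * k - 1)
             - quad k \<xi> w x i (\<lambda>t. shifted_legendre (x i) (x (Suc i)) (Suc k) t *
                                     shifted_legendre (x i) (x (Suc i)) (k - 1) t) > 0)"

text \<open>Value of M^* omega on the control volume I_{i,j}, j = 0..k: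
  (M^*omega)|I_{i,0} = q(x_{i,0}) + A_{i,0} q'(x_{i,0}) and successive jumps A_{i,j} q'(x_{i,j}).\<close>
definition Mstar_val :: "(nat \<Rightarrow> real) \<Rightarrow> (nat \<Rightarrow> real) \<Rightarrow> (nat \<Rightarrow> real) \<Rightarrow> (nat \<Rightarrow> real poly) \<Rightarrow> nat \<Rightarrow> nat \<Rightarrow> real" where
  "Mstar_val x \<xi> w q i j = poly (q i) (node x \<xi> i 0)
      + (\<Sum>l\<le>j. weight x w i l * poly (pderiv (q i)) (node x \<xi> i l))"

definition ip_star :: "nat \<Rightarrow> (nat \<Rightarrow> real) \<Rightarrow> (nat \<Rightarrow> real) \<Rightarrow> (nat \<Rightarrow> real) \<Rightarrow> nat \<Rightarrow> (nat \<Rightarrow> real poly) \<Rightarrow> (nat \<Rightarrow> real poly) \<Rightarrow> real" where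
  "ip_star k \<xi> w x n p q = (\<Sum>i<n. \<Sum>j\<le>k.
      Mstar_val x \<xi> w q i j * integral {node x \<xi> i j..node x \<xi> i (Suc j)} (poly (p i)))"

end

theory Submission
  imports Defs
begin

lemma antideriv_ex: "\<exists>F. pderiv F = (p::real poly)"
proof -
  have "\<forall>p::real poly. degree p \<le> d \<longrightarrow> (\<exists>F. pderiv F = p)" for d
  proof (induction d)
    case 0
    show ?case
    proof (intro allI impI)
      fix p :: "real poly" assume "degree p \<le> 0"
      then obtain c where "p = [:c:]" using degree0_coeffs by blast
      then have "pderiv [:0, c:] = p" by (simp add: pderiv_pCons)
      then show "\<exists>F. pderiv F = p" by blast
    qed
  next
    case (Suc d)
    show ?case
    proof (intro allI impI)
      fix p :: "real poly" assume dp: "degree p \<le> Suc d"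
      define c where "c = coeff p (Suc d)"
      define F0 where "F0 = monom (c / real (Suc (Suc d))) (Suc (Suc d))"
      have dF0: "pderiv F0 = monom c (Suc d)"
        unfolding F0_def pderiv_monom by simp
      have "degree (p - monom c (Suc d)) \<le> d"
      proof (rule degree_le, intro allI impI)
        fix i assume "d < i"
        show "coeff (p - monom c (Suc d)) i = 0"
        proof (cases "i = Suc d")
          case True then show ?thesis by (simp add: c_def coeff_monom)
        next
          case False then have "Suc d < i" using \<open>d < i\<close> by simp
          then show ?thesis using dp by (simp add: coeff_monom coeff_eq_0)
        qed
      qed
      then obtain G where "pderiv G = p - monom c (Suc d)" using Suc.IH by blast
      then have "pderiv (G + F0) = p" by (simp add: pderiv_add dF0)
      then show "\<exists>F. pderiv F = p" by blast
    qed
  qed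
  then show ?thesis by blast
qed

lemma integral_poly_ftc:
  fixes F f :: "real poly"
  assumes "pderiv F = f" "a \<le> b"
  shows "integral {a..b} (poly f) = poly F b - poly F a"
proof -
  have "(poly f has_integral (poly F b - poly F a)) {a..b}"
  proof (rule fundamental_theorem_of_calculus[of a b "poly F" "poly f", OF assms(2)])
    fix x assume "x \<in> {a..b}"
    have "DERIV (poly F) x :> poly f x" using poly_DERIV[of F x] assms(1) by simp
    then show "(poly F has_vector_derivative poly f x) (at x within {a..b})"
      using has_field_derivative_imp_has_derivative has_real_derivative_iff_has_vector_derivative
      by (metis DERIV_subset subset_UNIV)
  qed
  then show ?thesis by (rule integral_unique)
qed

fun LP :: "nat \<Rightarrow> real poly" where
  "LP 0 = 1"
| "LP (Suc 0) = [:0, 1:]"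
| "LP (Suc (Suc n)) = smult (1 / (real n + 2))
      (smult (2 * real n + 3) ([:0, 1:] * LP (Suc n)) - smult (real n + 1) (LP n))"

lemma poly_LP: "poly (LP n) t = legP n t"
  by (induction n rule: LP.induct) (simp_all add: field_simps)

lemma LP_SS: "LP (Suc (Suc n)) = smult (1 / (real n + 2))
      (smult (2 * real n + 3) ([:0, 1:] * LP (Suc n)) - smult (real n + 1) (LP n))" by simp

declare LP.simps(3)[simp del]

lemma bonnet_pt: "(real n + 2) * poly (LP (Suc (Suc n))) t
   = (2 * real n + 3) * t * poly (LP (Suc n)) t - (real n + 1) * poly (LP n) t"
  by (simp add: LP_SS field_simps)

lemma bonnet_d_pt: "(real n + 2) * poly (pderiv (LP (Suc (Suc n)))) t
   = (2 * real n + 3) * (poly (LP (Suc n)) t + t * poly (pderiv (LP (Suc n))) t)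
     - (real n + 1) * poly (pderiv (LP n)) t"
  by (simp add: LP_SS pderiv_smult pderiv_diff pderiv_mult pderiv_pCons field_simps)

lemma LP_AB: "poly (pderiv (LP (Suc n))) t = t * poly (pderiv (LP n)) t + (real n + 1) * poly (LP n) t
   \<and> t * poly (pderiv (LP (Suc n))) t - poly (pderiv (LP n)) t = (real n + 1) * poly (LP (Suc n)) t"
proof (induction n)
  case 0
  then show ?case by (simp add: pderiv_pCons)
next
  case (Suc n)
  define a where "a = poly (LP n) t"
  define b where "b = poly (LP (Suc n)) t"
  define c where "c = poly (LP (Suc (Suc n))) t"
  define da where "da = poly (pderiv (LP n)) t"
  define db where "db = poly (pderiv (LP (Suc n))) t"
  define dc where "dc = poly (pderiv (LP (Suc (Suc n)))) t"
  have A: "db = t * da + (real n + 1) * a" and B: "t * db - da = (real n + 1) * b"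
    using Suc.IH unfolding a_def b_def da_def db_def by auto
  have E: "(real n + 2) * c = (2 * real n + 3) * t * b - (real n + 1) * a"
    unfolding a_def b_def c_def by (rule bonnet_pt)
  have ED: "(real n + 2) * dc = (2 * real n + 3) * (b + t * db) - (real n + 1) * da"
    unfolding b_def da_def db_def dc_def by (rule bonnet_d_pt)
  have A2: "dc = t * db + (real n + 2) * b"
  proof -
    have "(real n + 2) * (dc - t * db - (real n + 2) * b) = (real n + 1) * (t * db - da - (real n + 1) * b)"
      using ED by (simp add: algebra_simps power2_eq_square)
    also have "\<dots> = 0" using B by simp
    finally show ?thesis by simp
  qed
  have B2: "t * dc - db = (real n + 2) * c"
  proof -
    have "(real n + 2) * (t * dc - db - (real n + 2) * c) = (real n + 2) * (t * da + (real n + 1) * a - db)"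
    proof -
      have tED: "t * ((real n + 2) * dc) = t * ((2 * real n + 3) * (b + t * db) - (real n + 1) * da)"
        using ED by simp
      have tB: "t * (t * db - da) = t * ((real n + 1) * b)" using B by simp
      show ?thesis using ED B E by algebra
    qed
    also have "\<dots> = 0" using A by simp
    finally show ?thesis by simp
  qed
  show ?case using A2 B2 unfolding b_def c_def db_def dc_def by (simp add: add.commute)
qed

fun lcn :: "nat \<Rightarrow> real" where
  "lcn 0 = 1"
| "lcn (Suc 0) = 1"
| "lcn (Suc (Suc n)) = (2 * real n + 3) / (real n + 2) * lcn (Suc n)"

lemma lcn_pos: "lcn n > 0"
  by (induction n rule: lcn.induct) auto

lemma coeff_LP_high: "coeff (LP n) m = (if m = n then lcn n else 0)" if "m \<ge> n"
  using that
proof (induction n arbitrary: m rule: LP.induct)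
  case 1
  then show ?case by (cases m) auto
next
  case 2
  then show ?case by (cases m) (auto simp: coeff_pCons split: nat.splits)
next
  case (3 n)
  obtain m' where m': "m = Suc m'" using 3 by (cases m) auto
  have "coeff (LP (Suc n)) m' = (if m' = Suc n then lcn (Suc n) else 0)"
    using 3 m' by (intro "3.IH"(1)) auto
  moreover have "coeff (LP n) m = 0" using 3 by (subst "3.IH"(2)) auto
  ultimately show ?case using 3 m' by (auto simp: LP_SS)
qed

lemma degree_LP: "degree (LP n) = n" and lead_LP: "coeff (LP n) n = lcn n"
proof -
  show "coeff (LP n) n = lcn n" using coeff_LP_high[of n n] by simp
  have "degree (LP n) \<le> n" by (rule degree_le) (auto simp: coeff_LP_high)
  moreover have "n \<le> degree (LP n)"
    using lcn_pos[of n] \<open>coeff (LP n) n = lcn n\<close> by (intro le_degree) auto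
  ultimately show "degree (LP n) = n" by simp
qed

definition J :: "real poly \<Rightarrow> real" where
  "J f = integral {-1..1} (poly f)"

lemma J_pderiv: "J (pderiv F) = poly F 1 - poly F (-1)"
  unfolding J_def by (rule integral_poly_ftc) auto

lemma J_add [simp]: "J (f + g) = J f + J g"
proof -
  obtain F G where "pderiv F = f" "pderiv G = g" using antideriv_ex by metis
  then show ?thesis using J_pderiv[of F] J_pderiv[of G] J_pderiv[of "F + G"]
    by (simp add: pderiv_add)
qed

lemma J_smult [simp]: "J (smult c f) = c * J f"
proof -
  obtain F where "pderiv F = f" using antideriv_ex by metis
  then have "J (smult c f) = c * poly F 1 - c * poly F (-1)" "J f = poly F 1 - poly F (-1)"
    using J_pderiv[of F] J_pderiv[of "smult c F"] by (simp_all add: pderiv_smult)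
  then show ?thesis by (simp add: right_diff_distrib)
qed

lemma J_minus [simp]: "J (- f) = - J f"
  using J_smult[of "-1" f] by simp

lemma J_diff [simp]: "J (f - g) = J f - J g"
  using J_add[of f "- g"] by simp

lemma J_sq_nonneg: "J (r * r) \<ge> 0"
  unfolding J_def
  by (rule integral_nonneg) (auto intro!: integrable_continuous_interval continuous_intros)

definition Wp :: "real poly" where "Wp = [:1, 0, -1:]"

lemma LP_iii: "Wp * pderiv (LP (Suc n)) = smult (real (Suc n)) (LP n - [:0, 1:] * LP (Suc n))"
proof -
  have "poly (Wp * pderiv (LP (Suc n))) t = poly (smult (real (Suc n)) (LP n - [:0, 1:] * LP (Suc n))) t" for t
  proof -
    have A: "poly (pderiv (LP (Suc n))) t = t * poly (pderiv (LP n)) t + (real n + 1) * poly (LP n) t"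
     and B: "t * poly (pderiv (LP (Suc n))) t - poly (pderiv (LP n)) t = (real n + 1) * poly (LP (Suc n)) t"
      using LP_AB[of n t] by auto
    show ?thesis unfolding Wp_def using A B by simp algebra
  qed
  then show ?thesis by (metis poly_eq_poly_eq_iff ext)
qed

lemma LP_ode: "pderiv (Wp * pderiv (LP n)) = smult (- (real n * (real n + 1))) (LP n)"
proof (cases n)
  case 0 then show ?thesis by simp
next
  case (Suc m)
  have "pderiv (Wp * pderiv (LP n)) = smult (real (Suc m)) (pderiv (LP m) - LP (Suc m) - [:0, 1:] * pderiv (LP (Suc m)))"
    unfolding Suc LP_iii by (simp add: pderiv_smult pderiv_diff pderiv_mult pderiv_pCons algebra_simps)
  also have "\<dots> = smult (- (real n * (real n + 1))) (LP n)"
  proof -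
    have "poly \<dots> t = poly (smult (- (real n * (real n + 1))) (LP n)) t" for t
    proof -
      have B: "t * poly (pderiv (LP (Suc m))) t - poly (pderiv (LP m)) t = (real m + 1) * poly (LP (Suc m)) t"
        using LP_AB[of m t] by auto
      show ?thesis unfolding Suc using B by simp algebra
    qed
    then show ?thesis by (metis poly_eq_poly_eq_iff ext)
  qed
  finally show ?thesis .
qed

lemma J_sym: "J (pderiv (Wp * pderiv f) * g) = - J (Wp * pderiv f * pderiv g)"
proof -
  have "J (pderiv (Wp * pderiv f * g)) = 0"
    unfolding J_pderiv Wp_def by simp
  moreover have "pderiv (Wp * pderiv f * g) = pderiv (Wp * pderiv f) * g + Wp * pderiv f * pderiv g"
    by (simp add: pderiv_mult algebra_simps)
  ultimately show ?thesis by simp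
qed

lemma LP_orth: assumes "n \<noteq> m" shows "J (LP n * LP m) = 0"
proof -
  have s1: "J (pderiv (Wp * pderiv (LP n)) * LP m) = - (real n * (real n + 1)) * J (LP n * LP m)"
    unfolding LP_ode mult_smult_left J_smult ..
  have s2: "J (pderiv (Wp * pderiv (LP m)) * LP n) = - (real m * (real m + 1)) * J (LP n * LP m)"
    unfolding LP_ode mult_smult_left J_smult by (simp only: mult.commute[of "LP m" "LP n"])
  have s3: "Wp * pderiv (LP n) * pderiv (LP m) = Wp * pderiv (LP m) * pderiv (LP n)"
    by (simp only: mult_ac)
  have "(real n * (real n + 1)) * J (LP n * LP m) = (real m * (real m + 1)) * J (LP n * LP m)"
    using J_sym[of "LP n" "LP m"] J_sym[of "LP m" "LP n"] s1 s2 s3 by simp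
  moreover have "real n * (real n + 1) \<noteq> real m * (real m + 1)"
  proof
    assume "real n * (real n + 1) = real m * (real m + 1)"
    moreover have "n < m \<Longrightarrow> real n * (real n + 1) < real m * (real m + 1)"
      by (intro mult_strict_mono) auto
    moreover have "m < n \<Longrightarrow> real m * (real m + 1) < real n * (real n + 1)"
      by (intro mult_strict_mono) auto
    ultimately show False using assms by linarith
  qed
  ultimately show ?thesis by simp
qed

lemma LP_orth_low: assumes "degree r < n" shows "J (LP n * r) = 0"
proof -
  have "\<forall>r. degree r \<le> d \<longrightarrow> d < n \<longrightarrow> J (LP n * r) = 0" for d
  proof (induction d)
    case 0
    show ?case
    proof (intro allI impI)
      fix r :: "real poly" assume "degree r \<le> 0" "0 < n"
      then obtain c where "r = [:c:]" using degree0_coeffs by blast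
      then have "r = smult c (LP 0)" by simp
      then show "J (LP n * r) = 0" using LP_orth[of n 0] \<open>0 < n\<close> by simp
    qed
  next
    case (Suc d)
    show ?case
    proof (intro allI impI)
      fix r :: "real poly" assume dr: "degree r \<le> Suc d" and dn: "Suc d < n"
      define c where "c = coeff r (Suc d) / lcn (Suc d)"
      have "degree (r - smult c (LP (Suc d))) \<le> d"
      proof (rule degree_le, intro allI impI)
        fix i assume "d < i"
        show "coeff (r - smult c (LP (Suc d))) i = 0"
        proof (cases "i = Suc d")
          case True then show ?thesis using lcn_pos[of "Suc d"] lead_LP[of "Suc d"] by (simp add: c_def)
        next
          case False then have "Suc d < i" using \<open>d < i\<close> by simp
          then show ?thesis using dr by (simp add: coeff_eq_0 coeff_LP_high)
        qed
      qed
      then have "J (LP n * (r - smult c (LP (Suc d)))) = 0" using Suc.IH dn by auto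
      moreover have "J (LP n * LP (Suc d)) = 0" using LP_orth dn by simp
      ultimately show "J (LP n * r) = 0" by (simp add: algebra_simps)
    qed
  qed
  then show ?thesis using assms by blast
qed

lemma bonnet_poly: "smult (real n + 2) (LP (Suc (Suc n)))
   = smult (2 * real n + 3) ([:0, 1:] * LP (Suc n)) - smult (real n + 1) (LP n)"
  by (simp add: LP_SS)

lemma LP_norm: "J (LP n * LP n) = 2 / (2 * real n + 1)"
proof -
  have N0: "J (LP 0 * LP 0) = 2"
    using J_pderiv[of "[:0, 1:]"] by (simp add: pderiv_pCons one_pCons)
  have "J (LP (Suc n) * LP (Suc n)) = 2 / (2 * real n + 3)" for n
  proof (induction n)
    case 0
    have "pderiv [:0, 0, 0, 1/3:] = [:0, 1:] * ([:0, 1:] :: real poly)" by (simp add: pderiv_pCons)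
    then show ?case using J_pderiv[of "[:0, 0, 0, 1/3:]"] by simp
  next
    case (Suc n)
    define M where "M = J ([:0, 1:] * LP (Suc n) * LP (Suc (Suc n)))"
    define N1 where "N1 = J (LP (Suc n) * LP (Suc n))"
    define N2 where "N2 = J (LP (Suc (Suc n)) * LP (Suc (Suc n)))"
    have e1: "(real n + 2) * N2 = (2 * real n + 3) * M"
    proof -
      have "(real n + 2) * N2
          = J (smult (real n + 2) (LP (Suc (Suc n))) * LP (Suc (Suc n)))" unfolding N2_def by simp
      also have "\<dots> = (2 * real n + 3) * J ([:0, 1:] * LP (Suc n) * LP (Suc (Suc n)))
                        - (real n + 1) * J (LP n * LP (Suc (Suc n)))"
        by (simp only: bonnet_poly left_diff_distrib mult_smult_left J_diff J_smult)
      finally show ?thesis using LP_orth[of n "Suc (Suc n)"] unfolding M_def by simp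
    qed
    have e2: "(2 * real n + 5) * M = (real n + 2) * N1"
    proof -
      have "0 = J (smult (real (Suc n) + 2) (LP (Suc (Suc (Suc n)))) * LP (Suc n))"
        using LP_orth[of "Suc (Suc (Suc n))" "Suc n"] by simp
      also have "\<dots> = (2 * real (Suc n) + 3) * J ([:0, 1:] * LP (Suc (Suc n)) * LP (Suc n))
                        - (real (Suc n) + 1) * J (LP (Suc n) * LP (Suc n))"
        by (simp only: bonnet_poly left_diff_distrib mult_smult_left J_diff J_smult)
      also have "[:0, 1:] * LP (Suc (Suc n)) * LP (Suc n) = [:0, 1:] * LP (Suc n) * LP (Suc (Suc n))"
        by (simp only: mult_ac)
      finally have "0 = (2 * real (Suc n) + 3) * M - (real (Suc n) + 1) * N1"
        unfolding M_def N1_def .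
      then show ?thesis by (simp add: add.commute)
    qed
    have hN1: "N1 = 2 / (2 * real n + 3)" using Suc.IH unfolding N1_def .
    have hM: "M = (real n + 2) * N1 / (2 * real n + 5)"
      using e2 by (simp add: field_simps)
    have "N2 = (2 * real n + 3) * M / (real n + 2)"
      using e1 by (simp add: field_simps)
    also have "\<dots> = 2 / (2 * real (Suc n) + 3)"
    proof -
      have p: "2 * real n + 3 \<noteq> 0" "2 * real n + 5 \<noteq> 0" "real n + 2 \<noteq> 0" by linarith+
      have g: "\<And>a b c :: real. a \<noteq> 0 \<Longrightarrow> b \<noteq> 0 \<Longrightarrow> c \<noteq> 0 \<Longrightarrow> a * (c * (2 / a) / b) / c = 2 / b"
        by (simp add: field_simps)
      have "2 * real (Suc n) + 3 = 2 * real n + 5" by simp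
      then show ?thesis unfolding hM hN1 using g[OF p] by simp
    qed
    finally show ?case unfolding N2_def .
  qed
  then show ?thesis using N0 by (cases n) (simp_all add: field_simps)
qed

lemma ref_bound:
  assumes "degree g \<le> k"
  shows "J (g * g) \<ge> (coeff g k)\<^sup>2 * 2 / ((2 * real k + 1) * (lcn k)\<^sup>2)"
proof -
  define \<alpha> where "\<alpha> = coeff g k / lcn k"
  define r where "r = g - smult \<alpha> (LP k)"
  have rc: "coeff r i = 0" if "i \<ge> k" for i
  proof (cases "i = k")
    case True then show ?thesis using lcn_pos[of k] lead_LP[of k] by (simp add: r_def \<alpha>_def)
  next
    case False then have "k < i" using that by simp
    then show ?thesis using assms by (simp add: r_def coeff_eq_0 coeff_LP_high)
  qed
  have Jr: "J (LP k * r) = 0"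
  proof (cases "k = 0")
    case True
    then have "r = 0" using rc by (intro poly_eqI) simp
    then show ?thesis using J_smult[of 0 0] by simp
  next
    case False
    have "degree r \<le> k - 1" by (rule degree_le) (use rc in auto)
    then show ?thesis using False by (intro LP_orth_low) simp
  qed
  have gg: "g * g = smult (\<alpha>\<^sup>2) (LP k * LP k) + smult (2 * \<alpha>) (LP k * r) + r * r"
    by (subst poly_eq_poly_eq_iff[symmetric]) (simp add: fun_eq_iff r_def algebra_simps power2_eq_square)
  have "J (g * g) = \<alpha>\<^sup>2 * (2 / (2 * real k + 1)) + J (r * r)"
    unfolding gg using Jr LP_norm[of k] by simp
  also have "\<dots> \<ge> \<alpha>\<^sup>2 * (2 / (2 * real k + 1))" using J_sq_nonneg[of r] by simp
  finally show ?thesis unfolding \<alpha>_def by (simp add: power_divide mult.commute)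
qed

lemma coeff_pcompose_lin:
  fixes f :: "real poly"
  assumes "degree f \<le> n" "d \<noteq> 0"
  shows "coeff (f \<circ>\<^sub>p [:c, d:]) n = coeff f n * d ^ n"
proof (cases "degree f = n")
  case True
  have "degree (f \<circ>\<^sub>p [:c, d:]) = n" using True assms by (simp add: degree_pcompose)
  then show ?thesis using lead_coeff_comp[of "[:c, d:]" f] True assms by simp
next
  case False
  then have "degree f < n" using assms by simp
  moreover have "degree (f \<circ>\<^sub>p [:c, d:]) = degree f" using assms by (simp add: degree_pcompose)
  ultimately show ?thesis by (simp add: coeff_eq_0)
qed

lemma transfer_int:
  fixes f :: "real poly" and a b :: real
  assumes "a < b"
  shows "integral {a..b} (poly f) = (b - a) / 2 * J (f \<circ>\<^sub>p [:(a + b) / 2, (b - a) / 2:])"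
proof -
  obtain F where F: "pderiv F = f" using antideriv_ex by metis
  define \<psi> where "\<psi> = [:(a + b) / 2, (b - a) / 2:]"
  define G where "G = smult (2 / (b - a)) (F \<circ>\<^sub>p \<psi>)"
  have "pderiv G = f \<circ>\<^sub>p \<psi>"
  proof -
    have "pderiv \<psi> = [:(b - a) / 2:]" unfolding \<psi>_def by (simp add: pderiv_pCons)
    then have "pderiv G = smult (2 / (b - a)) (smult ((b - a) / 2) (f \<circ>\<^sub>p \<psi>))"
      unfolding G_def by (simp add: pderiv_smult pderiv_pcompose F)
    also have "\<dots> = f \<circ>\<^sub>p \<psi>"
    proof -
      have "2 / (b - a) * ((b - a) / 2) = 1" using assms by simp
      then show ?thesis by (simp only: smult_smult smult_1_left)
    qed
    finally show ?thesis .
  qed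
  then have "J (f \<circ>\<^sub>p \<psi>) = poly G 1 - poly G (-1)" using J_pderiv by metis
  also have "\<dots> = 2 / (b - a) * (poly F b - poly F a)"
  proof -
    have "(a + b) / 2 + (b - a) / 2 = b" "(a + b) / 2 + (b - a) / 2 * (-1) = a" "(a + b) / 2 + (a - b) / 2 = a" by (simp_all add: field_simps)
    then show ?thesis unfolding G_def \<psi>_def by (simp add: poly_pcompose right_diff_distrib del: times_divide_eq_left)
  qed
  finally have "J (f \<circ>\<^sub>p \<psi>) = 2 / (b - a) * (poly F b - poly F a)" .
  moreover have "integral {a..b} (poly f) = poly F b - poly F a"
    using integral_poly_ftc[OF F] assms by simp
  ultimately show ?thesis unfolding \<psi>_def using assms by (simp add: field_simps)
qed

lemma sum_parts:
  fixes V d :: "nat \<Rightarrow> real"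
  shows "(\<Sum>j\<le>m. (c + (\<Sum>l\<le>j. d l)) * (V (Suc j) - V j))
     = c * (V (Suc m) - V 0) + (\<Sum>l\<le>m. d l * (V (Suc m) - V l))"
proof (induction m)
  case 0 then show ?case by (simp add: distrib_right)
next
  case (Suc m)
  have "(\<Sum>l\<le>Suc m. d l * (V (Suc (Suc m)) - V l))
      = (\<Sum>l\<le>m. d l * (V (Suc m) - V l)) + (\<Sum>l\<le>m. d l) * (V (Suc (Suc m)) - V (Suc m))
        + d (Suc m) * (V (Suc (Suc m)) - V (Suc m))"
  proof -
    have "(\<Sum>l\<le>m. d l * (V (Suc (Suc m)) - V l)) = (\<Sum>l\<le>m. d l * (V (Suc m) - V l) + d l * (V (Suc (Suc m)) - V (Suc m)))"
      by (rule sum.cong) (auto simp: algebra_simps)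
    then show ?thesis by (simp add: sum.distrib sum_distrib_right)
  qed
  then show ?case using Suc.IH by (simp add: algebra_simps)
qed

lemma poly_mult_fun: "poly (f * g) = (\<lambda>t. poly f t * poly g t)"
  by (simp add: fun_eq_iff)

lemma quad_poly_add: "quad k \<xi> w x i (poly (f + g)) = quad k \<xi> w x i (poly f) + quad k \<xi> w x i (poly g)"
  unfolding quad_def by (simp add: sum.distrib algebra_simps)

lemma quad_poly_smult: "quad k \<xi> w x i (poly (smult c f)) = c * quad k \<xi> w x i (poly f)"
  unfolding quad_def by (simp add: sum_distrib_left algebra_simps)

lemma int_poly_add:
  fixes f g :: "real poly"
  assumes "a \<le> b"
  shows "integral {a..b} (poly (f + g)) = integral {a..b} (poly f) + integral {a..b} (poly g)"
proof -
  obtain F G where "pderiv F = f" "pderiv G = g" using antideriv_ex by metis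
  then show ?thesis using integral_poly_ftc[of F f a b] integral_poly_ftc[of G g a b]
      integral_poly_ftc[of "F + G" "f + g" a b] assms by (simp add: pderiv_add)
qed

lemma int_poly_smult:
  fixes f :: "real poly"
  assumes "a \<le> b"
  shows "integral {a..b} (poly (smult c f)) = c * integral {a..b} (poly f)"
proof -
  obtain F where "pderiv F = f" using antideriv_ex by metis
  then show ?thesis using integral_poly_ftc[of F f a b]
      integral_poly_ftc[of "smult c F" "smult c f" a b] assms by (simp add: pderiv_smult right_diff_distrib)
qed

definition Rc :: "nat \<Rightarrow> (nat \<Rightarrow> real) \<Rightarrow> (nat \<Rightarrow> real) \<Rightarrow> (nat \<Rightarrow> real) \<Rightarrow> nat \<Rightarrow> real poly \<Rightarrow> real" where
  "Rc k \<xi> w x i f = integral {x i..x (Suc i)} (poly f) - quad k \<xi> w x i (poly f)"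

lemma Rc_lin:
  assumes "x i \<le> x (Suc i)"
  shows "Rc k \<xi> w x i (f + smult c g) = Rc k \<xi> w x i f + c * Rc k \<xi> w x i g"
  unfolding Rc_def using assms by (simp add: int_poly_add int_poly_smult quad_poly_add quad_poly_smult algebra_simps)

lemma cell_exact:
  fixes pp qq V :: "real poly"
  assumes "a \<le> b" "pderiv V = pp" "poly V a = 0"
  shows "integral {a..b} (\<lambda>t. poly pp t * poly qq t) = poly qq b * poly V b - integral {a..b} (poly (pderiv qq * V))"
proof -
  obtain W where W: "pderiv W = pderiv qq * V" using antideriv_ex by metis
  have "pderiv (qq * V - W) = pp * qq"
    using W assms by (simp add: pderiv_diff pderiv_mult algebra_simps)
  then have "integral {a..b} (poly (pp * qq)) = poly (qq * V - W) b - poly (qq * V - W) a"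
    using integral_poly_ftc assms by blast
  moreover have "integral {a..b} (poly (pderiv qq * V)) = poly W b - poly W a"
    using integral_poly_ftc[OF W] assms by blast
  moreover have "(\<lambda>t. poly pp t * poly qq t) = poly (pp * qq)" by (simp add: fun_eq_iff)
  ultimately show ?thesis using assms by simp
qed

lemma node_0: "\<xi> 0 = 0 \<Longrightarrow> node x \<xi> i 0 = x i"
  by (simp add: node_def)

lemma node_last: "\<xi> (Suc k) = 1 \<Longrightarrow> node x \<xi> i (Suc k) = x (Suc i)"
  by (simp add: node_def cell_size_def)

lemma cell_star:
  fixes pp V :: "real poly"
  assumes xi0: "\<xi> 0 = 0" and xi1: "\<xi> (Suc k) = 1" and mono: "\<forall>j\<le>k. \<xi> j < \<xi> (Suc j)"
    and ab: "x i < x (Suc i)"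
    and ex: "\<forall>p::real poly. degree p \<le> 2 * k - 1 \<longrightarrow>
               integral {x i..x (Suc i)} (poly p) - quad k \<xi> w x i (poly p) = 0"
    and dq: "degree (q i) \<le> k"
    and V: "pderiv V = pp" "poly V (x i) = 0"
  shows "(\<Sum>j\<le>k. Mstar_val x \<xi> w q i j * integral {node x \<xi> i j..node x \<xi> i (Suc j)} (poly pp))
       = poly (q i) (x (Suc i)) * poly V (x (Suc i)) - quad k \<xi> w x i (poly (pderiv (q i) * V))"
proof -
  define nd where "nd = node x \<xi> i"
  define d where "d = (\<lambda>l. weight x w i l * poly (pderiv (q i)) (nd l))"
  define Vn where "Vn = (\<lambda>j. poly V (nd j))"
  have h0: "cell_size x i > 0" using ab by (simp add: cell_size_def)
  have ints: "integral {nd j..nd (Suc j)} (poly pp) = Vn (Suc j) - Vn j" if "j \<le> k" for j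
  proof -
    have "\<xi> j < \<xi> (Suc j)" using mono that by blast
    then have "nd j \<le> nd (Suc j)" unfolding nd_def node_def using h0 by simp
    then show ?thesis unfolding Vn_def using integral_poly_ftc[OF V(1)] by blast
  qed
  have "(\<Sum>j\<le>k. Mstar_val x \<xi> w q i j * integral {nd j..nd (Suc j)} (poly pp))
      = (\<Sum>j\<le>k. (poly (q i) (nd 0) + (\<Sum>l\<le>j. d l)) * (Vn (Suc j) - Vn j))"
    by (rule sum.cong) (simp_all add: ints Mstar_val_def d_def nd_def[symmetric])
  also have "\<dots> = poly (q i) (nd 0) * (Vn (Suc k) - Vn 0) + (\<Sum>l\<le>k. d l * (Vn (Suc k) - Vn l))"
    by (rule sum_parts)
  also have "\<dots> = poly (q i) (x i) * Vn (Suc k) + Vn (Suc k) * (\<Sum>l\<le>k. d l) - (\<Sum>l\<le>k. d l * Vn l)"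
    using V(2) xi0 unfolding Vn_def nd_def
    by (simp add: node_0 algebra_simps sum_subtractf sum_distrib_left sum_distrib_right)
  also have "\<dots> = poly (q i) (x i) * Vn (Suc k) + Vn (Suc k) * (quad k \<xi> w x i (poly (pderiv (q i))) - d (Suc k))
                 - (quad k \<xi> w x i (poly (pderiv (q i) * V)) - d (Suc k) * Vn (Suc k))"
    unfolding quad_def d_def Vn_def nd_def by (simp add: algebra_simps)
  also have "quad k \<xi> w x i (poly (pderiv (q i))) = poly (q i) (x (Suc i)) - poly (q i) (x i)"
  proof -
    have "degree (pderiv (q i)) \<le> 2 * k - 1" using dq by (simp add: degree_pderiv)
    then have "quad k \<xi> w x i (poly (pderiv (q i))) = integral {x i..x (Suc i)} (poly (pderiv (q i)))"
      using ex by force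
    also have "\<dots> = poly (q i) (x (Suc i)) - poly (q i) (x i)"
      using integral_poly_ftc[of "q i" "pderiv (q i)"] ab by simp
    finally show ?thesis .
  qed
  also have "Vn (Suc k) = poly V (x (Suc i))" unfolding Vn_def nd_def using xi1 by (simp add: node_last)
  finally show ?thesis unfolding nd_def by (simp add: algebra_simps poly_mult_fun)
qed

lemma anti_V: "\<exists>V. pderiv V = (f::real poly) \<and> poly V a = 0 \<and> degree V \<le> degree f + 1"
proof -
  obtain F where F: "pderiv F = f" using antideriv_ex by metis
  define V where "V = F - [:poly F a:]"
  have dV: "pderiv V = f" unfolding V_def using F by (simp add: pderiv_diff)
  have "degree (pderiv V) = degree V - 1" by (rule degree_pderiv)
  then have "degree V \<le> degree f + 1" using dV by simp
  moreover have "poly V a = 0" unfolding V_def by simp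
  ultimately show ?thesis using dV by blast
qed

lemma coeff_mult_bound:
  fixes a b :: "real poly"
  assumes "degree a \<le> m" "degree b \<le> n"
  shows "coeff (a * b) (m + n) = coeff a m * coeff b n"
proof (cases "degree a = m \<and> degree b = n")
  case True then show ?thesis using coeff_mult_degree_sum[of a b] by simp
next
  case False
  then have "degree a < m \<or> degree b < n" using assms by auto
  moreover have "degree (a * b) \<le> degree a + degree b" by (rule degree_mult_le)
  ultimately have "degree (a * b) < m + n" "coeff a m * coeff b n = 0" using assms
    by (auto simp: coeff_eq_0)
  then show ?thesis by (simp add: coeff_eq_0)
qed

lemma lcn_rec: "real (Suc m) * lcn (Suc m) = (2 * real m + 1) * lcn m"
  by (cases m) (simp_all add: field_simps)

lemma cell_diff:
  fixes V :: "real poly"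
  assumes xi0: "\<xi> 0 = 0" and xi1: "\<xi> (Suc k) = 1" and mono: "\<forall>j\<le>k. \<xi> j < \<xi> (Suc j)"
    and ab: "x i < x (Suc i)"
    and ex: "\<forall>p::real poly. degree p \<le> 2 * k - 1 \<longrightarrow>
               integral {x i..x (Suc i)} (poly p) - quad k \<xi> w x i (poly p) = 0"
    and dq: "degree (q i) \<le> k"
    and V: "pderiv V = p i" "poly V (x i) = 0"
  shows "(\<Sum>j\<le>k. Mstar_val x \<xi> w q i j * integral {node x \<xi> i j..node x \<xi> i (Suc j)} (poly (p i)))
       = integral {x i..x (Suc i)} (\<lambda>t. poly (p i) t * poly (q i) t) + Rc k \<xi> w x i (pderiv (q i) * V)"
  using cell_star[where \<xi>=\<xi> and k=k and x=x and i=i and w=w and q=q and V=V and pp="p i", OF xi0 xi1 mono ab ex dq V] cell_exact[of "x i" "x (Suc i)" V "p i" "q i"] ab V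
  unfolding Rc_def by simp

lemma alg_final:
  fixes K h c S L0 L1 L2 H :: real
  assumes "K \<ge> 1" "h > 0" "L0 > 0" "L1 > 0" "L2 > 0" "(K + 1) * L2 = (2 * K + 1) * L1"
    "K * L1 = (2 * K - 1) * L0" "H > 0"
  shows "(K * c * (c / (K + 1))) / (L2 * L0 * (1 / H ^ 2)) * (h * S)
       = (2 * K - 1) * S * (h / 2 * ((c * H) ^ 2 * 2 / ((2 * K + 1) * L1 ^ 2)))"
proof -
  have p: "2 * K - 1 > 0" "K + 1 > 0" "2 * K + 1 > 0" using assms by linarith+
  have key: "K * (2 * K + 1) * L1 ^ 2 = (2 * K - 1) * (K + 1) * L2 * L0"
    using assms(6,7) by algebra
  have l: "(K * c * (c / (K + 1))) / (L2 * L0 * (1 / H ^ 2)) * (h * S)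
      = (K * c ^ 2 * H ^ 2 * h * S) / ((K + 1) * L2 * L0)"
    using assms p by (simp add: field_simps power2_eq_square)
  have r: "(2 * K - 1) * S * (h / 2 * ((c * H) ^ 2 * 2 / ((2 * K + 1) * L1 ^ 2)))
      = ((2 * K - 1) * S * h * c ^ 2 * H ^ 2) / ((2 * K + 1) * L1 ^ 2)"
    using assms p by (simp add: field_simps power2_eq_square)
  have "(K * c ^ 2 * H ^ 2 * h * S) * ((2 * K + 1) * L1 ^ 2) = ((2 * K - 1) * S * h * c ^ 2 * H ^ 2) * ((K + 1) * L2 * L0)"
    using key by algebra
  moreover have "(K + 1) * L2 * L0 \<noteq> 0" "(2 * K + 1) * L1 ^ 2 \<noteq> 0" using assms p by auto
  ultimately show ?thesis unfolding l r by (simp add: frac_eq_eq)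
qed

definition Sref :: "nat \<Rightarrow> (nat \<Rightarrow> real) \<Rightarrow> (nat \<Rightarrow> real) \<Rightarrow> real" where
  "Sref k \<xi> w = (\<Sum>j\<le>Suc k. w j * (legP (Suc k) (2 * \<xi> j - 1) * legP (k - 1) (2 * \<xi> j - 1)))"

lemma arg_simp: "(a::real) < b \<Longrightarrow> (2 * (a + (b - a) * z) - a - b) / (b - a) = 2 * z - 1"
proof -
  assume "a < b"
  then have "b - a \<noteq> 0" by simp
  then show ?thesis by (simp add: field_simps)
qed

lemma arg_simp2: "(a::real) < b \<Longrightarrow> poly [:- (a + b) / (b - a), 2 / (b - a):] (a + (b - a) * z) = 2 * z - 1"
proof -
  assume "a < b"
  then have nz: "b - a \<noteq> 0" by simp
  have "poly [:- (a + b) / (b - a), 2 / (b - a):] (a + (b - a) * z) = - (a + b) / (b - a) + (a + (b - a) * z) * (2 / (b - a))"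
    by simp
  also have "\<dots> = (- (a + b) + 2 * (a + (b - a) * z)) / (b - a)"
    by (simp only: add_divide_distrib times_divide_eq_right mult.commute[of _ 2])
  also have "- (a + b) + 2 * (a + (b - a) * z) = (b - a) * (2 * z - 1)" by (simp add: algebra_simps)
  finally show ?thesis using nz by simp
qed

lemma cond_quad:
  assumes "x i < x (Suc i)"
  shows "quad k \<xi> w x i (\<lambda>t. shifted_legendre (x i) (x (Suc i)) (Suc k) t * shifted_legendre (x i) (x (Suc i)) (k - 1) t)
       = cell_size x i * Sref k \<xi> w"
  unfolding quad_def Sref_def weight_def node_def shifted_legendre_def cell_size_def
  by (simp only: arg_simp[OF assms]) (simp add: sum_distrib_left mult_ac del: sum.atMost_Suc)

lemma quad_m:
  fixes PP :: "real poly"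
  assumes "x i < x (Suc i)"
  shows "quad k \<xi> w x i (poly (PP \<circ>\<^sub>p [:- (x i + x (Suc i)) / (x (Suc i) - x i), 2 / (x (Suc i) - x i):]))
       = cell_size x i * (\<Sum>j\<le>Suc k. w j * poly PP (2 * \<xi> j - 1))"
  unfolding quad_def weight_def node_def cell_size_def
  by (simp only: poly_pcompose arg_simp2[OF assms]) (simp add: sum_distrib_left mult_ac del: sum.atMost_Suc)

lemma cell_form:
  assumes xi0: "\<xi> 0 = 0" and xi1: "\<xi> (Suc k) = 1" and mono: "\<forall>j\<le>k. \<xi> j < \<xi> (Suc j)"
    and ab: "x i < x (Suc i)"
    and ex: "\<forall>p::real poly. degree p \<le> 2 * k - 1 \<longrightarrow>
               integral {x i..x (Suc i)} (poly p) - quad k \<xi> w x i (poly p) = 0"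
    and k1: "1 \<le> k"
    and dp: "degree (p i) \<le> k"
  shows "\<exists>B. 0 \<le> B \<and> B \<le> integral {x i..x (Suc i)} (\<lambda>t. poly (p i) t * poly (p i) t)
     \<and> (\<Sum>j\<le>k. Mstar_val x \<xi> w p i j * integral {node x \<xi> i j..node x \<xi> i (Suc j)} (poly (p i)))
        = integral {x i..x (Suc i)} (\<lambda>t. poly (p i) t * poly (p i) t) - (2 * real k - 1) * Sref k \<xi> w * B"
proof -
  define a where "a = x i"
  define b where "b = x (Suc i)"
  define h where "h = b - a"
  have h0: "h > 0" using ab unfolding h_def a_def b_def by simp
  define pp where "pp = p i"
  define c where "c = coeff pp k"
  obtain V where V: "pderiv V = pp" "poly V a = 0" "degree V \<le> degree pp + 1"
    using anti_V by blast
  define N where "N = integral {a..b} (\<lambda>t. poly pp t * poly pp t)"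
  define f where "f = pderiv pp * V"
  have star: "(\<Sum>j\<le>k. Mstar_val x \<xi> w p i j * integral {node x \<xi> i j..node x \<xi> i (Suc j)} (poly (p i)))
      = N + Rc k \<xi> w x i f"
    using cell_diff[where \<xi>=\<xi> and k=k and x=x and i=i and w=w and q=p and V=V and p=p, OF xi0 xi1 mono ab ex dp]
      V unfolding N_def f_def a_def b_def pp_def by simp
  have dpp: "degree pp \<le> k" using dp unfolding pp_def .
  have dd: "degree (pderiv pp) \<le> k - 1" using dpp by (simp add: degree_pderiv)
  have dV: "degree V \<le> k + 1" using V(3) dpp by simp
  have i2k: "2 * k = (k - 1) + (k + 1)" using k1 by simp
  have df: "degree f \<le> 2 * k"
    using degree_mult_le[of "pderiv pp" V] dd dV i2k unfolding f_def by linarith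
  have c1: "coeff (pderiv pp) (k - 1) = real k * c"
    using k1 unfolding c_def coeff_pderiv by simp
  have c2: "coeff V (k + 1) = c / real (k + 1)"
  proof -
    have "coeff (pderiv V) k = real (Suc k) * coeff V (Suc k)" by (rule coeff_pderiv)
    then have "c = real (Suc k) * coeff V (Suc k)" using V(1) unfolding c_def by simp
    then show ?thesis by (simp add: field_simps)
  qed
  have cf: "coeff f (2 * k) = real k * c * (c / (real k + 1))"
    unfolding f_def i2k using coeff_mult_bound[OF dd dV] c1 c2 by simp
  define s where "s = [:- (a + b) / h, 2 / h:]"
  define \<psi> where "\<psi> = [:(a + b) / 2, h / 2:]"
  define PP where "PP = LP (Suc k) * LP (k - 1)"
  define m where "m = PP \<circ>\<^sub>p s"
  have dPP: "degree PP \<le> (k + 1) + (k - 1)" unfolding PP_def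
    using degree_mult_le[of "LP (Suc k)" "LP (k - 1)"] by (simp add: degree_LP)
  have cPP: "coeff PP ((k + 1) + (k - 1)) = lcn (Suc k) * lcn (k - 1)"
    unfolding PP_def using coeff_mult_bound[of "LP (Suc k)" "k + 1" "LP (k - 1)" "k - 1"]
    by (simp add: degree_LP lead_LP)
  have i2k': "(k + 1) + (k - 1) = 2 * k" using k1 by simp
  have dm: "degree m \<le> 2 * k"
    unfolding m_def s_def using dPP i2k' h0 by (simp add: degree_pcompose)
  have cm: "coeff m (2 * k) = lcn (Suc k) * lcn (k - 1) * (2 / h) ^ (2 * k)"
    unfolding m_def s_def using coeff_pcompose_lin[of PP "2 * k" "2 / h" "- (a + b) / h"] dPP cPP i2k' h0
    by (simp add: mult_2)
  have cm0: "coeff m (2 * k) \<noteq> 0" unfolding cm using h0 lcn_pos[of "Suc k"] lcn_pos[of "k - 1"] by simp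
  define \<gamma> where "\<gamma> = coeff f (2 * k) / coeff m (2 * k)"
  define g where "g = f + smult (- \<gamma>) m"
  have dg: "degree g \<le> 2 * k - 1"
  proof (rule degree_le, intro allI impI)
    fix n assume n: "2 * k - 1 < n"
    show "coeff g n = 0"
    proof (cases "n = 2 * k")
      case True then show ?thesis unfolding g_def \<gamma>_def using cm0 by simp
    next
      case False then have "2 * k < n" using n k1 by simp
      then show ?thesis unfolding g_def using df dm by (simp add: coeff_eq_0)
    qed
  qed
  have Rg: "Rc k \<xi> w x i g = 0" using ex dg unfolding Rc_def by blast
  have Rlin: "Rc k \<xi> w x i g = Rc k \<xi> w x i f + (- \<gamma>) * Rc k \<xi> w x i m"
    unfolding g_def by (rule Rc_lin) (use ab in simp)
  have mpsi: "m \<circ>\<^sub>p \<psi> = PP"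
  proof -
    have "poly (m \<circ>\<^sub>p \<psi>) t = poly PP t" for t
    proof -
      have hn: "h \<noteq> 0" using h0 by simp
      have "poly s (poly \<psi> t) = t" unfolding s_def \<psi>_def using hn
        by (simp add: field_simps)
      then show ?thesis unfolding m_def by (simp add: poly_pcompose)
    qed
    then show ?thesis by (metis poly_eq_poly_eq_iff ext)
  qed
  have intm: "integral {a..b} (poly m) = 0"
  proof -
    have "integral {a..b} (poly m) = (b - a) / 2 * J (m \<circ>\<^sub>p [:(a + b) / 2, (b - a) / 2:])"
      using transfer_int[of a b m] h0 unfolding h_def by simp
    also have "m \<circ>\<^sub>p [:(a + b) / 2, (b - a) / 2:] = PP" using mpsi unfolding \<psi>_def h_def .
    also have "J PP = 0" unfolding PP_def using LP_orth[of "Suc k" "k - 1"] by simp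
    finally show ?thesis by simp
  qed
  have quadm: "quad k \<xi> w x i (poly m) = h * Sref k \<xi> w"
  proof -
    have "quad k \<xi> w x i (poly m) = cell_size x i * (\<Sum>j\<le>Suc k. w j * poly PP (2 * \<xi> j - 1))"
      unfolding m_def s_def h_def a_def b_def by (rule quad_m[OF ab])
    also have "(\<Sum>j\<le>Suc k. w j * poly PP (2 * \<xi> j - 1)) = Sref k \<xi> w"
      unfolding Sref_def PP_def by (simp add: poly_LP)
    finally show ?thesis unfolding h_def a_def b_def cell_size_def by simp
  qed
  have Rm: "Rc k \<xi> w x i m = - h * Sref k \<xi> w"
    unfolding Rc_def using intm quadm unfolding a_def b_def by simp
  have Rf: "Rc k \<xi> w x i f = - \<gamma> * h * Sref k \<xi> w" using Rg Rlin Rm by simp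
  define pr where "pr = pp \<circ>\<^sub>p \<psi>"
  have dpr: "degree pr \<le> k" unfolding pr_def \<psi>_def using dpp h0 by (simp add: degree_pcompose)
  have cpr: "coeff pr k = c * (h / 2) ^ k"
    unfolding pr_def \<psi>_def c_def using coeff_pcompose_lin[OF dpp, of "h / 2" "(a + b) / 2"] h0 by simp
  have NJ: "N = h / 2 * J (pr * pr)"
  proof -
    have "N = integral {a..b} (poly (pp * pp))" unfolding N_def by (simp add: poly_mult_fun)
    also have "\<dots> = h / 2 * J ((pp * pp) \<circ>\<^sub>p \<psi>)"
      using transfer_int[of a b "pp * pp"] h0 unfolding h_def \<psi>_def by simp
    finally show ?thesis unfolding pr_def by (simp add: pcompose_mult)
  qed
  define B where "B = h / 2 * ((c * (h / 2) ^ k) ^ 2 * 2 / ((2 * real k + 1) * (lcn k) ^ 2))"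
  have B0: "0 \<le> B" unfolding B_def using h0 by simp
  have BN: "B \<le> N"
  proof -
    have "h / 2 * ((coeff pr k)\<^sup>2 * 2 / ((2 * real k + 1) * (lcn k)\<^sup>2)) \<le> h / 2 * J (pr * pr)"
      using mult_left_mono[OF ref_bound[OF dpr], of "h / 2"] h0 by simp
    then show ?thesis unfolding NJ B_def cpr .
  qed
  have lr1: "(real k + 1) * lcn (Suc k) = (2 * real k + 1) * lcn k"
    using lcn_rec[of k] by (simp add: add.commute)
  have lr2: "real k * lcn k = (2 * real k - 1) * lcn (k - 1)"
    using lcn_rec[of "k - 1"] k1 by (simp add: of_nat_diff)
  have pw: "(2 / h) ^ (2 * k) = 1 / ((h / 2) ^ k) ^ 2"
    by (simp add: power_mult[symmetric] mult.commute power_one_over[symmetric] power_divide)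
  have key: "\<gamma> * h * Sref k \<xi> w = (2 * real k - 1) * Sref k \<xi> w * B"
  proof -
    have "\<gamma> * h * Sref k \<xi> w
       = (real k * c * (c / (real k + 1))) / (lcn (Suc k) * lcn (k - 1) * (1 / ((h / 2) ^ k) ^ 2)) * (h * Sref k \<xi> w)"
      unfolding \<gamma>_def cf cm pw by simp
    also have "\<dots> = (2 * real k - 1) * Sref k \<xi> w * (h / 2 * ((c * (h / 2) ^ k) ^ 2 * 2 / ((2 * real k + 1) * (lcn k) ^ 2)))"
      by (rule alg_final) (use k1 h0 lcn_pos lr1 lr2 in auto)
    finally show ?thesis unfolding B_def .
  qed
  show ?thesis
    using B0 BN star Rf key unfolding N_def a_def b_def pp_def by (intro exI[of _ B]) auto
qed

lemma final_bounds:
  fixes N Bs F \<sigma> :: real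
  assumes "0 \<le> Bs" "Bs \<le> N" "\<sigma> < 1" "F = N - \<sigma> * Bs"
  shows "sqrt (min 1 (1 - \<sigma>)) * sqrt N \<le> sqrt F \<and> sqrt F \<le> sqrt (max 1 (1 - \<sigma>)) * sqrt N"
proof -
  have lo: "min 1 (1 - \<sigma>) * N \<le> F"
  proof (cases "\<sigma> \<ge> 0")
    case True
    have "\<sigma> * Bs \<le> \<sigma> * N" using True assms by (simp add: mult_left_mono)
    moreover have "min 1 (1 - \<sigma>) * N = N - \<sigma> * N" using True by (simp add: algebra_simps)
    ultimately show ?thesis using assms by linarith
  next
    case False
    have "\<sigma> * Bs \<le> 0" using False assms by (simp add: mult_nonpos_nonneg)
    then show ?thesis using assms False by (simp add: min_def)
  qed
  have hi: "F \<le> max 1 (1 - \<sigma>) * N"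
  proof (cases "\<sigma> \<ge> 0")
    case True
    have "0 \<le> \<sigma> * Bs" using True assms by simp
    then show ?thesis using assms True by (simp add: max_def)
  next
    case False
    have "\<sigma> * N \<le> \<sigma> * Bs" using False assms by (simp add: mult_left_mono_neg)
    moreover have "max 1 (1 - \<sigma>) * N = N - \<sigma> * N" using False by (simp add: algebra_simps)
    ultimately show ?thesis using assms by linarith
  qed
  have "sqrt (min 1 (1 - \<sigma>)) * sqrt N = sqrt (min 1 (1 - \<sigma>) * N)" by (simp add: real_sqrt_mult)
  also have "\<dots> \<le> sqrt F" using lo by simp
  finally have 1: "sqrt (min 1 (1 - \<sigma>)) * sqrt N \<le> sqrt F" .
  have "sqrt F \<le> sqrt (max 1 (1 - \<sigma>) * N)" using hi by simp
  also have "\<dots> = sqrt (max 1 (1 - \<sigma>)) * sqrt N" by (simp add: real_sqrt_mult)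
  finally show ?thesis using 1 by simp
qed

theorem proposition3p10:
  fixes k :: nat and \<xi> w :: "nat \<Rightarrow> real" and Cq :: real
  assumes "\<xi> 0 = 0" and "\<xi> (Suc k) = 1" and "\<forall>j\<le>k. \<xi> j < \<xi> (Suc j)"
  shows "\<exists>c>0. \<exists>C>0. \<forall>(x::nat \<Rightarrow> real) n.
     (n \<ge> 1 \<and> (\<forall>i<n. x i < x (Suc i)) \<and> quasi_uniform Cq x n \<and> assumption_S k \<xi> w x n) \<longrightarrow>
     ((\<forall>p q. pw_space n k p \<and> pw_space n (k - 1) q \<longrightarrow> ip_star k \<xi> w x n p q = pw_ip x n p q)
      \<and> (\<forall>p. pw_space n k p \<longrightarrow>
            c * sqrt (pw_ip x n p p) \<le> sqrt (ip_star k \<xi> w x n p p)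
          \<and> sqrt (ip_star k \<xi> w x n p p) \<le> C * sqrt (pw_ip x n p p)))"
proof -
  note xi0 = assms(1) and xi1 = assms(2) and mono = assms(3)
  define \<sigma> where "\<sigma> = (2 * real k - 1) * Sref k \<xi> w"
  define c0 where "c0 = (if \<sigma> < 1 then sqrt (min 1 (1 - \<sigma>)) else 1)"
  define C0 where "C0 = sqrt (max 1 (1 - \<sigma>))"
  have c0pos: "c0 > 0" unfolding c0_def by auto
  have C0pos: "C0 > 0" unfolding C0_def by auto
  have main: "((\<forall>p q. pw_space n k p \<and> pw_space n (k - 1) q \<longrightarrow> ip_star k \<xi> w x n p q = pw_ip x n p q)
      \<and> (\<forall>p. pw_space n k p \<longrightarrow>
            c0 * sqrt (pw_ip x n p p) \<le> sqrt (ip_star k \<xi> w x n p p)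
          \<and> sqrt (ip_star k \<xi> w x n p p) \<le> C0 * sqrt (pw_ip x n p p)))"
    if n1: "n \<ge> 1" and xs: "\<forall>i<n. x i < x (Suc i)" and S: "assumption_S k \<xi> w x n" for x n
  proof -
    have k1: "1 \<le> k" using S unfolding assumption_S_def by simp
    have ex: "\<forall>p::real poly. degree p \<le> 2 * k - 1 \<longrightarrow>
               integral {x i..x (Suc i)} (poly p) - quad k \<xi> w x i (poly p) = 0" if "i < n" for i
      using S that unfolding assumption_S_def by blast
    have sig: "\<sigma> < 1"
    proof -
      have "cell_size x 0 / real (2 * k - 1)
             - quad k \<xi> w x 0 (\<lambda>t. shifted_legendre (x 0) (x (Suc 0)) (Suc k) t *
                                     shifted_legendre (x 0) (x (Suc 0)) (k - 1) t) > 0"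
        using S n1 unfolding assumption_S_def by auto
      then have "cell_size x 0 / real (2 * k - 1) - cell_size x 0 * Sref k \<xi> w > 0"
        using cond_quad[of x 0 k \<xi> w] xs n1 by simp
      moreover have "cell_size x 0 > 0" using xs n1 unfolding cell_size_def by simp
      ultimately have "cell_size x 0 * Sref k \<xi> w < cell_size x 0 * (1 / real (2 * k - 1))"
        "cell_size x 0 > 0" by simp_all
      then have "Sref k \<xi> w < 1 / real (2 * k - 1)"
        by (metis mult_less_cancel_left_pos)
      then have "1 / real (2 * k - 1) - Sref k \<xi> w > 0" by simp
      moreover have "real (2 * k - 1) = 2 * real k - 1" using k1 by (simp add: of_nat_diff)
      moreover have "2 * real k - 1 > 0" using k1 by simp
      ultimately show ?thesis unfolding \<sigma>_def by (simp add: field_simps)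
    qed
    have part1: "ip_star k \<xi> w x n p q = pw_ip x n p q"
      if "pw_space n k p" "pw_space n (k - 1) q" for p q
    proof -
      have "(\<Sum>j\<le>k. Mstar_val x \<xi> w q i j * integral {node x \<xi> i j..node x \<xi> i (Suc j)} (poly (p i)))
          = integral {x i..x (Suc i)} (\<lambda>t. poly (p i) t * poly (q i) t)" if i: "i < n" for i
      proof -
        obtain V where V: "pderiv V = p i" "poly V (x i) = 0" "degree V \<le> degree (p i) + 1"
          using anti_V by blast
        have dq: "degree (q i) \<le> k - 1" using \<open>pw_space n (k - 1) q\<close> i unfolding pw_space_def by blast
        have dV: "degree V \<le> k + 1" using V(3) \<open>pw_space n k p\<close> i unfolding pw_space_def by force
        have deg: "degree (pderiv (q i) * V) \<le> 2 * k - 1"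
        proof (cases "degree (q i) = 0")
          case True then have "pderiv (q i) = 0" by (simp add: pderiv_eq_0_iff)
          then show ?thesis by simp
        next
          case False
          have "degree (pderiv (q i)) = degree (q i) - 1" by (rule degree_pderiv)
          then have "degree (pderiv (q i)) + degree V \<le> 2 * k - 1" using dq dV False by linarith
          then show ?thesis using degree_mult_le[of "pderiv (q i)" V] by linarith
        qed
        have R0: "Rc k \<xi> w x i (pderiv (q i) * V) = 0" using ex[OF i] deg unfolding Rc_def by blast
        have dq': "degree (q i) \<le> k" using dq by simp
        show ?thesis
          using cell_diff[where \<xi>=\<xi> and k=k and x=x and i=i and w=w and q=q and V=V and p=p,
                OF xi0 xi1 mono _ ex[OF i] dq' V(1,2)] xs i R0 by simp
      qed
      then show ?thesis unfolding ip_star_def pw_ip_def by (intro sum.cong) auto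
    qed
    have part2: "c0 * sqrt (pw_ip x n p p) \<le> sqrt (ip_star k \<xi> w x n p p)
          \<and> sqrt (ip_star k \<xi> w x n p p) \<le> C0 * sqrt (pw_ip x n p p)"
      if pk: "pw_space n k p" for p
    proof -
      define P where "P = (\<lambda>i B. 0 \<le> B \<and> B \<le> integral {x i..x (Suc i)} (\<lambda>t. poly (p i) t * poly (p i) t)
     \<and> (\<Sum>j\<le>k. Mstar_val x \<xi> w p i j * integral {node x \<xi> i j..node x \<xi> i (Suc j)} (poly (p i)))
        = integral {x i..x (Suc i)} (\<lambda>t. poly (p i) t * poly (p i) t) - (2 * real k - 1) * Sref k \<xi> w * B)"
      have allB: "\<forall>i\<in>{..<n}. \<exists>B. P i B"
      proof
        fix i assume "i \<in> {..<n}"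
        then have i: "i < n" by simp
        have dp: "degree (p i) \<le> k" using pk i unfolding pw_space_def by blast
        show "\<exists>B. P i B" unfolding P_def using cell_form[where \<xi>=\<xi> and k=k and x=x and i=i and w=w and p=p,
                OF xi0 xi1 mono _ ex[OF i] k1 dp] xs i by blast
      qed
      obtain B where B': "\<forall>i\<in>{..<n}. P i (B i)" using bchoice[OF allB] by blast
      have B: "0 \<le> B i \<and> B i \<le> integral {x i..x (Suc i)} (\<lambda>t. poly (p i) t * poly (p i) t)
     \<and> (\<Sum>j\<le>k. Mstar_val x \<xi> w p i j * integral {node x \<xi> i j..node x \<xi> i (Suc j)} (poly (p i)))
        = integral {x i..x (Suc i)} (\<lambda>t. poly (p i) t * poly (p i) t) - (2 * real k - 1) * Sref k \<xi> w * B i"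
        if "i \<in> {..<n}" for i
        using B' that unfolding P_def by blast
      have F: "ip_star k \<xi> w x n p p = pw_ip x n p p - \<sigma> * sum B {..<n}"
      proof -
        have "ip_star k \<xi> w x n p p = (\<Sum>i<n. integral {x i..x (Suc i)} (\<lambda>t. poly (p i) t * poly (p i) t) - \<sigma> * B i)"
          unfolding ip_star_def \<sigma>_def using B by (intro sum.cong) auto
        then show ?thesis unfolding pw_ip_def by (simp add: sum_subtractf sum_distrib_left)
      qed
      have B0: "0 \<le> sum B {..<n}" using B by (intro sum_nonneg) auto
      have BN: "sum B {..<n} \<le> pw_ip x n p p" unfolding pw_ip_def using B by (intro sum_mono) auto
      show ?thesis using final_bounds[OF B0 BN sig F] sig unfolding c0_def C0_def by simp
    qed
    show ?thesis using part1 part2 by blast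
  qed
  show ?thesis
    by (rule exI[of _ c0], rule conjI[OF c0pos], rule exI[of _ C0], rule conjI[OF C0pos]) (use main in blast)
qed

end
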